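(* For each fixed $k\geq 3$, $$AW(k;r)\leq \frac{2^{k-2}}{(k-1)!}\,r^{k-1}\,(1+o(1))\quad\text{as } r\to\infty.$$
   Context: A sequence of positive integers $w_1<\dots<w_n$ is an ascending wave if $w_{i+1}-w_i \geq w_i-w_{i-1}$ for $2\le i\le n-1$. For positive integers $k,r$, $AW(k;r)$ denotes the least positive integer $N$ such that every $r$-coloring of $\{1,\dots,N\}$ contains a $k$-term monochromatic ascending wave. *)

theory Defs
  imports Complex_Main
begin

definition ascending_wave :: "(nat \<Rightarrow> nat) \<Rightarrow> nat \<Rightarrow> bool" where
  "ascending_wave w n \<longleftrightarrow>
     (\<forall>i. Suc i < n \<longrightarrow> w i < w (Suc i)) \<and>
     (\<forall>i. i + 2 < n \<longrightarrow> w (Suc i) - w i \<le> w (i + 2) - w (Suc i))"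

definition has_mono_wave :: "nat \<Rightarrow> nat \<Rightarrow> (nat \<Rightarrow> nat) \<Rightarrow> bool" where
  "has_mono_wave k N c \<longleftrightarrow>
     (\<exists>w. ascending_wave w k \<and> (\<forall>i<k. w i \<in> {1..N} \<and> c (w i) = c (w 0)))"

definition AW :: "nat \<Rightarrow> nat \<Rightarrow> nat" where
  "AW k r = (LEAST N. 0 < N \<and>
      (\<forall>c :: nat \<Rightarrow> nat. (\<forall>x\<in>{1..N}. c x < r) \<longrightarrow> has_mono_wave k N c))"

end

theory Submission
  imports Defs
begin

definition PW :: "nat \<Rightarrow> nat \<Rightarrow> nat \<Rightarrow> bool" where
  "PW k r N \<longleftrightarrow> (\<forall>(a::nat) (c::nat\<Rightarrow>nat). card (c ` {a<..a+N}) \<le> r \<longrightarrow>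
     (\<exists>w. ascending_wave w k \<and> (\<forall>i<k. w i \<in> {a<..a+N} \<and> c (w i) = c (w 0))))"

fun g :: "nat \<Rightarrow> nat \<Rightarrow> nat" where
  "g k 0 = 1"
| "g k (Suc r) = (if k \<le> 2 then r + 2 else 2 * g (k-1) (Suc r) + g k r)"

declare g.simps(2)[simp del]

lemma g_Suc_le2: "k \<le> 2 \<Longrightarrow> g k (Suc r) = r + 2" by (simp add: g.simps(2))
lemma g_Suc_gt2: "\<not> k \<le> 2 \<Longrightarrow> g k (Suc r) = 2 * g (k-1) (Suc r) + g k r" by (simp add: g.simps(2))

lemma PW_zero: "k \<ge> 1 \<Longrightarrow> PW k 0 1"
  unfolding PW_def by auto

lemma PW_two: "PW 2 r (r+1)"
  unfolding PW_def
proof (intro allI impI)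
  fix a :: nat and c :: "nat \<Rightarrow> nat"
  assume h: "card (c ` {a<..a+(r+1)}) \<le> r"
  have "\<not> inj_on c {a<..a+(r+1)}"
  proof
    assume "inj_on c {a<..a+(r+1)}"
    then have "card (c ` {a<..a+(r+1)}) = r+1" by (simp add: card_image)
    with h show False by simp
  qed
  then obtain x y where xy: "x \<in> {a<..a+(r+1)}" "y \<in> {a<..a+(r+1)}" "x \<noteq> y" "c x = c y"
    unfolding inj_on_def by blast
  define w where "w = (\<lambda>i::nat. if i = 0 then min x y else max x y)"
  have "ascending_wave w 2" using xy unfolding ascending_wave_def w_def by auto
  moreover have "\<forall>i<2. w i \<in> {a<..a+(r+1)} \<and> c (w i) = c (w 0)"
    using xy unfolding w_def by (auto simp: less_2_cases_iff min_def max_def)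
  ultimately show "\<exists>w. ascending_wave w 2 \<and> (\<forall>i<2. w i \<in> {a<..a+(r+1)} \<and> c (w i) = c (w 0))"
    by blast
qed

lemma PW_step:
  assumes k: "k \<ge> 2" and r: "r \<ge> 1"
    and PM: "PW k r M" and PL: "PW (Suc k) (r-1) L"
  shows "PW (Suc k) r (2*M + L)"
  unfolding PW_def
proof (intro allI impI)
  fix a :: nat and c :: "nat \<Rightarrow> nat"
  assume h: "card (c ` {a<..a+(2*M+L)}) \<le> r"
  have sub1: "{a<..a+M} \<subseteq> {a<..a+(2*M+L)}" by auto
  have "card (c ` {a<..a+M}) \<le> r"
    by (rule order_trans[OF card_mono[OF _ image_mono[OF sub1]] h]) simp
  with PM obtain w where w: "ascending_wave w k" "\<forall>i<k. w i \<in> {a<..a+M} \<and> c (w i) = c (w 0)"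
    unfolding PW_def by blast
  define x where "x = w (k-1)"
  define D where "D = w (k-1) - w (k-2)"
  have x: "x \<in> {a<..a+M}" using w(2) k unfolding x_def by auto
  have "w (k-2) \<in> {a<..a+M}" using w(2) k by auto
  then have xD: "x + D < a + 2*M + 1" using x unfolding x_def D_def by auto
  show "\<exists>w. ascending_wave w (Suc k) \<and> (\<forall>i<Suc k. w i \<in> {a<..a+(2*M+L)} \<and> c (w i) = c (w 0))"
  proof (cases "\<exists>y\<in>{a+2*M<..a+2*M+L}. c y = c (w 0)")
    case True
    then obtain y where y: "y \<in> {a+2*M<..a+2*M+L}" "c y = c (w 0)" by blast
    define w' where "w' = w(k := y)"
    have wk0: "w' 0 = w 0" using k unfolding w'_def by auto
    have "ascending_wave w' (Suc k)"
      unfolding ascending_wave_def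
    proof (intro conjI allI impI)
      fix i assume i: "Suc i < Suc k"
      show "w' i < w' (Suc i)"
      proof (cases "Suc i = k")
        case True
        then have "w' i = x" "w' (Suc i) = y" unfolding w'_def x_def by auto
        then show ?thesis using x y by auto
      next
        case False
        then show ?thesis using w(1) i unfolding w'_def ascending_wave_def by auto
      qed
    next
      fix i assume i: "i + 2 < Suc k"
      show "w' (Suc i) - w' i \<le> w' (i + 2) - w' (Suc i)"
      proof (cases "i + 2 = k")
        case True
        then have e: "w' (Suc i) = x" "w' i = w (k-2)" "w' (i+2) = y" unfolding w'_def x_def by auto
        have "x + D < y" using xD y(1) by auto
        then show ?thesis using e unfolding D_def x_def by linarith
      next
        case False
        then show ?thesis using w(1) i unfolding w'_def ascending_wave_def by auto
      qed
    qed
    moreover have "\<forall>i<Suc k. w' i \<in> {a<..a+(2*M+L)} \<and> c (w' i) = c (w' 0)"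
    proof (intro allI impI)
      fix i assume i: "i < Suc k"
      show "w' i \<in> {a<..a+(2*M+L)} \<and> c (w' i) = c (w' 0)"
      proof (cases "i = k")
        case True
        then show ?thesis using y wk0 unfolding w'_def by auto
      next
        case False
        then have "i < k" using i by auto
        then have "w' i = w i" unfolding w'_def using False by simp
        moreover have "w i \<in> {a<..a+M} \<and> c (w i) = c (w 0)" using w(2) \<open>i < k\<close> by blast
        ultimately show ?thesis using wk0 sub1 by auto
      qed
    qed
    ultimately show ?thesis by blast
  next
    case False
    have sub2: "{a+2*M<..a+2*M+L} \<subseteq> {a<..a+(2*M+L)}" by auto
    have "c ` {a+2*M<..a+2*M+L} \<subseteq> c ` {a<..a+(2*M+L)} - {c (w 0)}"
    proof (rule subsetI)
      fix z assume "z \<in> c ` {a+2*M<..a+2*M+L}"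
      then obtain y where yy: "y \<in> {a+2*M<..a+2*M+L}" "z = c y" by blast
      then have ne: "c y \<noteq> c (w 0)" using False by blast
      have "y \<in> {a<..a+(2*M+L)}" using yy(1) by auto
      then have "z \<in> c ` {a<..a+(2*M+L)}" using yy(2) by blast
      then show "z \<in> c ` {a<..a+(2*M+L)} - {c (w 0)}" using ne yy(2) 
        apply (intro DiffI) 
        using [[show_types]] apply assumption
        apply simp
        done
    qed
    moreover have "c (w 0) \<in> c ` {a<..a+(2*M+L)}"
    proof -
      have "w 0 \<in> {a<..a+M}" using w(2) k by simp
      then have "w 0 \<in> {a<..a+(2*M+L)}" by simp
      then show ?thesis by (rule imageI)
    qed
    ultimately have "card (c ` {a+2*M<..a+2*M+L}) \<le> r - 1"
    proof -
      assume A: "c ` {a+2*M<..a+2*M+L} \<subseteq> c ` {a<..a+(2*M+L)} - {c (w 0)}"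
        and B: "c (w 0) \<in> c ` {a<..a+(2*M+L)}"
      have "card (c ` {a+2*M<..a+2*M+L}) \<le> card (c ` {a<..a+(2*M+L)} - {c (w 0)})"
        using A by (intro card_mono) auto
      also have "\<dots> = card (c ` {a<..a+(2*M+L)}) - 1" using B by (simp add: card_Diff_singleton)
      finally show ?thesis using h by linarith
    qed
    with PL obtain v where v: "ascending_wave v (Suc k)"
      "\<forall>i<Suc k. v i \<in> {a+2*M<..a+2*M+L} \<and> c (v i) = c (v 0)"
      unfolding PW_def by blast
    then show ?thesis using sub2 by blast
  qed
qed

lemma PW_g: "k \<ge> 2 \<Longrightarrow> PW k r (g k r)"
proof (induction k r rule: g.induct)
  case (1 k)
  then show ?case using PW_zero by simp
next
  case (2 k r)
  show ?case
  proof (cases "k \<le> 2")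
    case True
    then have "k = 2" using 2 by simp
    then show ?thesis using PW_two[of "Suc r"] by (simp add: g_Suc_le2)
  next
    case False
    have a: "PW (k-1) (Suc r) (g (k-1) (Suc r))" using 2 False by simp
    have b: "PW k r (g k r)" using 2 False by simp
    have "PW (Suc (k-1)) (Suc r) (2 * g (k-1) (Suc r) + g k r)"
      using PW_step[of "k-1" "Suc r" "g (k-1) (Suc r)" "g k r"] a b False by simp
    then show ?thesis using False by (simp add: g_Suc_gt2)
  qed
qed

lemma g_bound: "k \<ge> 2 \<Longrightarrow> g k r \<le> 2^(k-2) * ((r+k-1) choose (k-1))"
proof (induction k r rule: g.induct)
  case (1 k)
  then show ?case by simp
next
  case (2 k r)
  show ?case
  proof (cases "k \<le> 2")
    case True
    then have "k = 2" using 2 by simp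
    then show ?thesis by (simp add: g_Suc_le2)
  next
    case False
    define j where "j = k - 3"
    have j: "k = Suc (Suc (Suc j))" using False unfolding j_def by simp
    have a: "g (k-1) (Suc r) \<le> 2^j * ((r+j+2) choose (Suc j))" using 2 False j by simp
    have b: "g k r \<le> 2^(Suc j) * ((r+j+2) choose (Suc (Suc j)))" using 2 j by simp
    have "g k (Suc r) = 2 * g (k-1) (Suc r) + g k r" using False by (simp add: g_Suc_gt2)
    also have "\<dots> \<le> 2 * (2^j * ((r+j+2) choose (Suc j))) + 2^(Suc j) * ((r+j+2) choose (Suc (Suc j)))"
      using a b by linarith
    also have "\<dots> = 2^(Suc j) * (Suc (r+j+2) choose (Suc (Suc j)))"
      by (simp add: algebra_simps)
    finally show ?thesis using j by simp
  qed
qed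

lemma AW_le_g:
  assumes "k \<ge> 2" shows "AW k r \<le> g k r"
proof -
  have pos: "0 < g k r"
  proof (induction r)
    case 0 then show ?case by simp
  next
    case (Suc r) then show ?case by (cases "k \<le> 2") (simp_all add: g_Suc_le2 g_Suc_gt2)
  qed
  have "\<forall>c :: nat \<Rightarrow> nat. (\<forall>x\<in>{1..g k r}. c x < r) \<longrightarrow> has_mono_wave k (g k r) c"
  proof (intro allI impI)
    fix c :: "nat \<Rightarrow> nat"
    assume h: "\<forall>x\<in>{1..g k r}. c x < r"
    have e: "{0<..0 + g k r} = {1..g k r}" by auto
    have "c ` {1..g k r} \<subseteq> {..<r}" using h by auto
    then have "card (c ` {0<..0 + g k r}) \<le> r" unfolding e
      by (metis card_lessThan card_mono finite_lessThan)
    then obtain w where "ascending_wave w k" "\<forall>i<k. w i \<in> {0<..0 + g k r} \<and> c (w i) = c (w 0)"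
      using PW_g[OF assms, of r] unfolding PW_def by blast
    then show "has_mono_wave k (g k r) c" unfolding has_mono_wave_def e by blast
  qed
  then show ?thesis unfolding AW_def using pos by (intro Least_le) simp
qed

lemma AW_real_bound:
  assumes "k \<ge> 2"
  shows "real (AW k r) \<le> 2^(k-2) / fact (k-1) * (real r + real (k-1)) ^ (k-1)"
proof -
  have "real (AW k r) \<le> real (g k r)" using AW_le_g[OF assms] by simp
  also have "\<dots> \<le> 2^(k-2) * real ((r+k-1) choose (k-1))"
  proof -
    have "real (g k r) \<le> real (2^(k-2) * ((r+k-1) choose (k-1)))"
      using g_bound[OF assms, of r] by (simp only: of_nat_le_iff)
    then show ?thesis by simp
  qed
  also have "real ((r+k-1) choose (k-1)) \<le> real (r+k-1) ^ (k-1) / fact (k-1)"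
  proof -
    have "real ((r+k-1) choose (k-1)) * fact (k-1) \<le> real (r+k-1) ^ (k-1)"
    proof -
      have "real (((r+k-1) choose (k-1)) * fact (k-1)) \<le> real ((r+k-1) ^ (k-1))"
        using binomial_fact_pow[of "r+k-1" "k-1"] by (simp only: of_nat_le_iff)
      then show ?thesis by simp
    qed
    then show ?thesis by (simp add: field_simps)
  qed
  then have "2^(k-2) * real ((r+k-1) choose (k-1)) \<le> 2^(k-2) * (real (r+k-1) ^ (k-1) / fact (k-1))"
    by (intro mult_left_mono) auto
  also have "real (r+k-1) = real r + real (k-1)" using assms by simp
  finally show ?thesis by simp
qed

theorem corollary1p5:
  fixes k :: nat
  assumes "k \<ge> 3"
  shows "\<forall>\<epsilon>>0. eventually (\<lambda>r. real (AW k r)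
           \<le> 2 ^ (k - 2) / fact (k - 1) * real r ^ (k - 1) * (1 + \<epsilon>)) sequentially"
proof (intro allI impI)
  fix \<epsilon> :: real assume e: "\<epsilon> > 0"
  define m where "m = k - 1"
  define C :: real where "C = 2 ^ (k - 2) / fact (k - 1)"
  have C0: "C \<ge> 0" unfolding C_def by simp
  have "(\<lambda>r. real m / of_nat r) \<longlonglongrightarrow> 0" by (rule lim_const_over_n)
  then have "(\<lambda>r. (1 + real m / of_nat r) ^ m) \<longlonglongrightarrow> (1 + 0) ^ m"
    by (intro tendsto_intros)
  then have "(\<lambda>r. (1 + real m / of_nat r) ^ m) \<longlonglongrightarrow> 1" by simp
  then have ev1: "eventually (\<lambda>r. (1 + real m / of_nat r) ^ m < 1 + \<epsilon>) sequentially"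
    using e by (intro order_tendstoD(2)) auto
  have ev2: "eventually (\<lambda>r::nat. r > 0) sequentially" by (rule eventually_gt_at_top)
  show "eventually (\<lambda>r. real (AW k r)
           \<le> 2 ^ (k - 2) / fact (k - 1) * real r ^ (k - 1) * (1 + \<epsilon>)) sequentially"
    using ev1 ev2
  proof eventually_elim
    case (elim r)
    have rp: "real r > 0" using elim by simp
    have eq: "(real r + real m) ^ m = real r ^ m * (1 + real m / real r) ^ m"
    proof -
      have "real r + real m = real r * (1 + real m / real r)" using rp by (simp add: field_simps)
      then show ?thesis by (simp add: power_mult_distrib)
    qed
    have "real (AW k r) \<le> C * (real r + real m) ^ m"
      using AW_real_bound[of k r] assms unfolding C_def m_def by simp
    also have "\<dots> = C * real r ^ m * (1 + real m / real r) ^ m" using eq by simp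
    also have "\<dots> \<le> C * real r ^ m * (1 + \<epsilon>)"
      using elim(1) C0 rp by (intro mult_left_mono) auto
    finally show ?case unfolding C_def m_def by simp
  qed
qed

end
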